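(* There is an absolute constant $c_0>0$ such that the following holds. Let $n\ge 2$, $\mathcal F\subseteq S_n$ with $|\mathcal F|=c\,n!$, $0<c<1$, $\eta=\min\{c,1-c\}$, $f=2\chi_{\mathcal F}-1$, $f_1$ its projection onto $U_1$, and $\epsilon=\mathbb E[(f-f_1)^2]$ with $0<\epsilon\le c_0\eta^7$. If $(X,Y)$ is a typical restriction, then either $g_1$ is $(3\epsilon^{1/7},19\epsilon^{1/7})$-almost close to $c-\tfrac12$ and $g_2+c-\tfrac12$ is $(4\epsilon^{1/7},24\epsilon^{1/7})$-almost Boolean, or the same holds with the roles of $g_1$ and $g_2$ interchanged (all on $T_{X,Y}$ with the uniform measure).
   Context: $S_n$ is the symmetric group on $[n]$; $T_{ij}$ is the indicator of $\{\pi:\pi(i)=j\}$; $U_1=\mathrm{span}\{T_{ij}\}$ with inner product $\langle f,g\rangle=\frac1{n!}\sum_\pi f(\pi)g(\pi)$. Let $a_{ij}=(n-1)\langle f,T_{ij}\rangle-\frac{n-2}{n}(2c-1)$. A restriction is $(X,Y)$ with $X,Y\subseteq[n]$, $|X|=|Y|$; $T_{X,Y}=\{\pi:\pi(X)=Y\}$ with uniform measure. For $\pi\in T_{X,Y}$, $g_1(\pi)=\sum_{i\in X}a_{i\pi(i)}$, $g_2(\pi)=\sum_{i\notin X}a_{i\pi(i)}$, $g=g_1+g_2$. A function $\phi$ is $(\delta,\epsilon)$-almost Boolean if $\Pr[||\phi|-1|\le\epsilon]\ge1-\delta$, and $(\delta,\epsilon)$-almost close to $C$ if $\Pr[|\phi-C|\le\epsilon]\ge1-\delta$.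 A restriction is typical if: (a) $g$ is $(\epsilon^{4/7},\epsilon^{1/7})$-almost Boolean; (b) $\mathbb E[g_1],\mathbb E[g_2]$ are within $\epsilon^{1/7}$ of $c-\frac12$; (c) $\mathbb E[(|g|-1)^2]\le\epsilon^{6/7}$. *)

theory Defs
  imports Complex_Main "HOL-Combinatorics.Permutations"
begin

definition Sn :: "nat \<Rightarrow> (nat \<Rightarrow> nat) set" where
  "Sn n = {\<pi>. \<pi> permutes {..<n}}"

definition avg :: "'a set \<Rightarrow> ('a \<Rightarrow> real) \<Rightarrow> real" where
  "avg A \<phi> = (\<Sum>x\<in>A. \<phi> x) / real (card A)"

definition unif_prob :: "'a set \<Rightarrow> ('a \<Rightarrow> bool) \<Rightarrow> real" where
  "unif_prob A P = real (card {x\<in>A. P x}) / real (card A)"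

text \<open>Inner product <f,g> = (1/n!) sum over S_n (card (Sn n) = n!).\<close>
definition inner_Sn :: "nat \<Rightarrow> ((nat \<Rightarrow> nat) \<Rightarrow> real) \<Rightarrow> ((nat \<Rightarrow> nat) \<Rightarrow> real) \<Rightarrow> real" where
  "inner_Sn n f g = avg (Sn n) (\<lambda>\<pi>. f \<pi> * g \<pi>)"

definition Tij :: "nat \<Rightarrow> nat \<Rightarrow> (nat \<Rightarrow> nat) \<Rightarrow> real" where
  "Tij i j = (\<lambda>\<pi>. if \<pi> i = j then 1 else 0)"

text \<open>U_1 = span of the T_ij, as functions on S_n (extended by 0 outside S_n).\<close>
definition U1 :: "nat \<Rightarrow> ((nat \<Rightarrow> nat) \<Rightarrow> real) set" where
  "U1 n = {h. \<exists>w. \<forall>\<pi>. h \<pi> =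
      (if \<pi> \<in> Sn n then (\<Sum>i<n. \<Sum>j<n. w i j * Tij i j \<pi>) else 0)}"

definition proj_U1 :: "nat \<Rightarrow> ((nat \<Rightarrow> nat) \<Rightarrow> real) \<Rightarrow> ((nat \<Rightarrow> nat) \<Rightarrow> real)" where
  "proj_U1 n f = (THE h. h \<in> U1 n \<and>
      (\<forall>i<n. \<forall>j<n. inner_Sn n (\<lambda>\<pi>. f \<pi> - h \<pi>) (Tij i j) = 0))"

definition pm_ind :: "(nat \<Rightarrow> nat) set \<Rightarrow> (nat \<Rightarrow> nat) \<Rightarrow> real" where
  "pm_ind F = (\<lambda>\<pi>. 2 * (if \<pi> \<in> F then 1 else 0) - 1)"

definition coef :: "nat \<Rightarrow> ((nat \<Rightarrow> nat) \<Rightarrow> real) \<Rightarrow> real \<Rightarrow> nat \<Rightarrow> nat \<Rightarrow> real" where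
  "coef n f c i j = (real n - 1) * inner_Sn n f (Tij i j) - (real n - 2) / real n * (2 * c - 1)"

definition TXY :: "nat \<Rightarrow> nat set \<Rightarrow> nat set \<Rightarrow> (nat \<Rightarrow> nat) set" where
  "TXY n X Y = {\<pi> \<in> Sn n. \<pi> ` X = Y}"

definition gfun1 :: "(nat \<Rightarrow> nat \<Rightarrow> real) \<Rightarrow> nat set \<Rightarrow> (nat \<Rightarrow> nat) \<Rightarrow> real" where
  "gfun1 a X \<pi> = (\<Sum>i\<in>X. a i (\<pi> i))"

definition gfun2 :: "nat \<Rightarrow> (nat \<Rightarrow> nat \<Rightarrow> real) \<Rightarrow> nat set \<Rightarrow> (nat \<Rightarrow> nat) \<Rightarrow> real" where
  "gfun2 n a X \<pi> = (\<Sum>i\<in>{..<n} - X. a i (\<pi> i))"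

definition almost_boolean :: "'a set \<Rightarrow> real \<Rightarrow> real \<Rightarrow> ('a \<Rightarrow> real) \<Rightarrow> bool" where
  "almost_boolean A \<delta> \<epsilon> \<phi> \<longleftrightarrow> unif_prob A (\<lambda>x. \<bar>\<bar>\<phi> x\<bar> - 1\<bar> \<le> \<epsilon>) \<ge> 1 - \<delta>"

definition almost_close :: "'a set \<Rightarrow> real \<Rightarrow> real \<Rightarrow> real \<Rightarrow> ('a \<Rightarrow> real) \<Rightarrow> bool" where
  "almost_close A \<delta> \<epsilon> C \<phi> \<longleftrightarrow> unif_prob A (\<lambda>x. \<bar>\<phi> x - C\<bar> \<le> \<epsilon>) \<ge> 1 - \<delta>"

definition typical :: "nat \<Rightarrow> (nat \<Rightarrow> nat \<Rightarrow> real) \<Rightarrow> real \<Rightarrow> real \<Rightarrow> nat set \<Rightarrow> nat set \<Rightarrow> bool" where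
  "typical n a c \<epsilon> X Y \<longleftrightarrow>
     X \<subseteq> {..<n} \<and> Y \<subseteq> {..<n} \<and> card X = card Y \<and>
     (let T = TXY n X Y; g1 = gfun1 a X; g2 = gfun2 n a X; g = (\<lambda>\<pi>. g1 \<pi> + g2 \<pi>) in
       almost_boolean T (\<epsilon> powr (4/7)) (\<epsilon> powr (1/7)) g \<and>
       \<bar>avg T g1 - (c - 1/2)\<bar> \<le> \<epsilon> powr (1/7) \<and>
       \<bar>avg T g2 - (c - 1/2)\<bar> \<le> \<epsilon> powr (1/7) \<and>
       avg T (\<lambda>\<pi>. (\<bar>g \<pi>\<bar> - 1)^2) \<le> \<epsilon> powr (6/7))"

end

theory Submission
  imports Defs
begin

definition mrg :: "nat set \<Rightarrow> (nat \<Rightarrow> nat) \<Rightarrow> (nat \<Rightarrow> nat) \<Rightarrow> (nat \<Rightarrow> nat)" where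
  "mrg X p q = (\<lambda>i. if i \<in> X then p i else q i)"

lemma mrg_in:
  assumes X: "X \<subseteq> {..<n}" and p: "p \<in> TXY n X Y" and q: "q \<in> TXY n X Y"
  shows "mrg X p q \<in> TXY n X Y"
proof -
  have pp: "p permutes {..<n}" and pY: "p ` X = Y" using p by (auto simp: TXY_def Sn_def)
  have qp: "q permutes {..<n}" and qY: "q ` X = Y" using q by (auto simp: TXY_def Sn_def)
  have Ysub: "Y \<subseteq> {..<n}" using pY X permutes_image[OF pp] by blast
  have b1: "bij_betw p X Y" using pY permutes_inj[OF pp] by (auto simp: bij_betw_def inj_on_def inj_def)
  have b2: "bij_betw q ({..<n} - X) ({..<n} - Y)"
  proof -
    have "q ` ({..<n} - X) = q ` {..<n} - q ` X"
      using permutes_inj[OF qp] by (simp add: image_set_diff)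
    then have "q ` ({..<n} - X) = {..<n} - Y" using permutes_image[OF qp] qY by simp
    then show ?thesis using permutes_inj[OF qp] by (auto simp: bij_betw_def inj_on_def inj_def)
  qed
  have c1: "bij_betw (mrg X p q) X Y" using b1 by (rule bij_betw_cong[THEN iffD1, rotated]) (auto simp: mrg_def)
  have c2: "bij_betw (mrg X p q) ({..<n} - X) ({..<n} - Y)" using b2
    by (rule bij_betw_cong[THEN iffD1, rotated]) (auto simp: mrg_def)
  have "bij_betw (mrg X p q) (X \<union> ({..<n} - X)) (Y \<union> ({..<n} - Y))"
    by (rule bij_betw_combine[OF c1 c2]) auto
  moreover have "X \<union> ({..<n} - X) = {..<n}" "Y \<union> ({..<n} - Y) = {..<n}" using X Ysub by auto
  ultimately have bb: "bij_betw (mrg X p q) {..<n} {..<n}" by simp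
  have st: "\<And>x. x \<notin> {..<n} \<Longrightarrow> mrg X p q x = x"
    using X qp by (auto simp: mrg_def permutes_def)
  have "mrg X p q permutes {..<n}" by (rule bij_imp_permutes[OF bb st])
  moreover have "mrg X p q ` X = Y" using pY by (auto simp: mrg_def)
  ultimately show ?thesis by (simp add: TXY_def Sn_def)
qed

lemma mrg_invol: "mrg X (mrg X p q) (mrg X q p) = p"
  by (auto simp: mrg_def)

lemma g1_mrg: "gfun1 a X (mrg X p q) = gfun1 a X p"
  by (simp add: gfun1_def mrg_def)

lemma g2_mrg: "gfun2 n a X (mrg X p q) = gfun2 n a X q"
  by (simp add: gfun2_def mrg_def)

lemma indep_perm:
  assumes X: "X \<subseteq> {..<n}"
  shows "(\<Sum>p\<in>TXY n X Y. \<Sum>q\<in>TXY n X Y. H (gfun1 a X p) (gfun2 n a X q))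
       = real (card (TXY n X Y)) * (\<Sum>p\<in>TXY n X Y. H (gfun1 a X p) (gfun2 n a X p))"
proof -
  let ?T = "TXY n X Y"
  let ?A = "gfun1 a X" and ?B = "gfun2 n a X"
  let ?\<Phi> = "\<lambda>(p,q). (mrg X p q, mrg X q p)"
  have "(\<Sum>p\<in>?T. \<Sum>q\<in>?T. H (?A p) (?B q)) = (\<Sum>(p,q)\<in>?T \<times> ?T. H (?A p) (?B q))"
    by (simp add: sum.cartesian_product)
  also have "\<dots> = (\<Sum>(p,q)\<in>?T \<times> ?T. H (?A p) (?B p))"
  proof (rule sum.reindex_bij_witness[where i = ?\<Phi> and j = ?\<Phi>])
    fix z assume "z \<in> ?T \<times> ?T" then show "?\<Phi> (?\<Phi> z) = z" by (auto simp: mrg_invol split: prod.splits)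
  next
    fix z assume "z \<in> ?T \<times> ?T" then show "?\<Phi> z \<in> ?T \<times> ?T" using mrg_in[OF X] by (auto split: prod.splits)
  next
    fix z assume "z \<in> ?T \<times> ?T" then show "?\<Phi> (?\<Phi> z) = z" by (auto simp: mrg_invol split: prod.splits)
  next
    fix z assume "z \<in> ?T \<times> ?T" then show "?\<Phi> z \<in> ?T \<times> ?T" using mrg_in[OF X] by (auto split: prod.splits)
  next
    fix z assume "z \<in> ?T \<times> ?T"
    show "(case ?\<Phi> z of (p, q) \<Rightarrow> H (?A p) (?B p)) = (case z of (p, q) \<Rightarrow> H (?A p) (?B q))"
      by (auto simp: g1_mrg g2_mrg split: prod.splits)
  qed
  also have "\<dots> = (\<Sum>p\<in>?T. \<Sum>q\<in>?T. H (?A p) (?B p))"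
    by (rule sum.cartesian_product[symmetric])
  also have "\<dots> = real (card ?T) * (\<Sum>p\<in>?T. H (?A p) (?B p))"
    by (simp add: sum_distrib_left)
  finally show ?thesis .
qed



lemma ind_ge: "(if P then 1 else 0::real) \<ge> 0" "(if P then 1 else 0::real) \<le> 1" by auto

lemma exists_lt1:
  assumes "finite T" "(\<Sum>x\<in>T. h x) < real (card T)"
  shows "\<exists>x\<in>T. h x < (1::real)"
proof (rule ccontr)
  assume "\<not> ?thesis"
  then have "(\<Sum>x\<in>T. (1::real)) \<le> (\<Sum>x\<in>T. h x)" by (intro sum_mono) auto
  then show False using assms by simp
qed

lemma amgm_abs:
  fixes x s :: real assumes "s > 0"
  shows "\<bar>x\<bar> \<le> 1 + s/2 + (\<bar>x\<bar> - 1)^2 * (1/(2*s))"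
proof -
  let ?y = "\<bar>x\<bar> - 1"
  have "0 \<le> (?y - s)^2" by simp
  then have "2 * ?y * s \<le> ?y^2 + s^2" by (simp add: power2_eq_square algebra_simps)
  then have "?y \<le> (?y^2 + s^2) / (2*s)" using assms by (simp add: field_simps)
  also have "\<dots> = s/2 + ?y^2 * (1/(2*s))" using assms by (simp add: field_simps power2_eq_square)
  finally show ?thesis by simp
qed

lemma fourfold:
  fixes A B :: "'a \<Rightarrow> real"
  assumes indep: "\<And>H. (\<Sum>p\<in>T. \<Sum>q\<in>T. H (A p) (B q)) = real (card T) * (\<Sum>p\<in>T. H (A p) (B p))"
  shows "real (card T) ^ 2 * (\<Sum>p\<in>T. \<Sum>q\<in>T. F (A p) (A q) * G (B p) (B q))
    = (\<Sum>p\<in>T. \<Sum>q\<in>T. F (A p) (A q)) * (\<Sum>p\<in>T. \<Sum>q\<in>T. G (B p) (B q))"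
proof -
  let ?N = "real (card T)"
  have e1: "?N * (\<Sum>q\<in>T. F (A p) (A q) * G (B p) (B q)) = (\<Sum>q\<in>T. \<Sum>q'\<in>T. F (A p) (A q) * G (B p) (B q'))" for p
    using indep[of "\<lambda>x y. F (A p) x * G (B p) y"] by simp
  have e2: "?N * (\<Sum>p\<in>T. F (A p) (A q) * G (B p) (B q')) = (\<Sum>p\<in>T. \<Sum>p'\<in>T. F (A p) (A q) * G (B p') (B q'))" for q q'
    using indep[of "\<lambda>x y. F x (A q) * G y (B q')"] by simp
  have "?N ^ 2 * (\<Sum>p\<in>T. \<Sum>q\<in>T. F (A p) (A q) * G (B p) (B q))
      = ?N * (\<Sum>p\<in>T. ?N * (\<Sum>q\<in>T. F (A p) (A q) * G (B p) (B q)))"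
    by (simp only: power2_eq_square sum_distrib_left mult.assoc)
  also have "\<dots> = ?N * (\<Sum>p\<in>T. \<Sum>q\<in>T. \<Sum>q'\<in>T. F (A p) (A q) * G (B p) (B q'))"
    by (simp only: e1)
  also have "\<dots> = ?N * (\<Sum>q\<in>T. \<Sum>q'\<in>T. \<Sum>p\<in>T. F (A p) (A q) * G (B p) (B q'))"
  proof -
    have "(\<Sum>p\<in>T. \<Sum>q\<in>T. \<Sum>q'\<in>T. F (A p) (A q) * G (B p) (B q'))
       = (\<Sum>q\<in>T. \<Sum>p\<in>T. \<Sum>q'\<in>T. F (A p) (A q) * G (B p) (B q'))" by (rule sum.swap)
    also have "\<dots> = (\<Sum>q\<in>T. \<Sum>q'\<in>T. \<Sum>p\<in>T. F (A p) (A q) * G (B p) (B q'))"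
      by (rule sum.cong[OF refl], rule sum.swap)
    finally show ?thesis by simp
  qed
  also have "\<dots> = (\<Sum>q\<in>T. \<Sum>q'\<in>T. ?N * (\<Sum>p\<in>T. F (A p) (A q) * G (B p) (B q')))"
    by (simp only: sum_distrib_left)
  also have "\<dots> = (\<Sum>q\<in>T. \<Sum>q'\<in>T. \<Sum>p\<in>T. \<Sum>p'\<in>T. F (A p) (A q) * G (B p') (B q'))"
    by (simp only: e2)
  also have "\<dots> = (\<Sum>q\<in>T. \<Sum>q'\<in>T. (\<Sum>p\<in>T. F (A p) (A q)) * (\<Sum>p'\<in>T. G (B p') (B q')))"
    by (simp only: sum_product)
  also have "\<dots> = (\<Sum>q\<in>T. (\<Sum>p\<in>T. F (A p) (A q)) * (\<Sum>q'\<in>T. \<Sum>p'\<in>T. G (B p') (B q')))"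
    by (simp only: sum_distrib_left)
  also have "\<dots> = (\<Sum>q\<in>T. \<Sum>p\<in>T. F (A p) (A q)) * (\<Sum>q'\<in>T. \<Sum>p'\<in>T. G (B p') (B q'))"
    by (simp only: sum_distrib_right)
  also have "\<dots> = (\<Sum>p\<in>T. \<Sum>q\<in>T. F (A p) (A q)) * (\<Sum>p\<in>T. \<Sum>q\<in>T. G (B p) (B q))"
    using sum.swap[of "\<lambda>q p. F (A p) (A q)" T T] sum.swap[of "\<lambda>q p. G (B p) (B q)" T T] by simp
  finally show ?thesis .
qed


lemma quad:
  fixes a a' b b' t :: real
  assumes "0 < t" "t < 1/2" "2*t < \<bar>a - a'\<bar>" "2*t < \<bar>b - b'\<bar>"
    "\<bar>\<bar>a+b\<bar> - 1\<bar> \<le> t" "\<bar>\<bar>a'+b'\<bar> - 1\<bar> \<le> t" "\<bar>\<bar>a+b'\<bar> - 1\<bar> \<le> t" "\<bar>\<bar>a'+b\<bar> - 1\<bar> \<le> t"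
  shows False
  using assms by (simp add: abs_if split: if_splits) linarith?

lemma split_lemma:
  fixes A B :: "'a \<Rightarrow> real"
  assumes indep: "\<And>H. (\<Sum>p\<in>T. \<Sum>q\<in>T. H (A p) (B q)) = real (card T) * (\<Sum>p\<in>T. H (A p) (B p))"
    and t: "0 < t" "t < 1/2"
    and bad: "(\<Sum>p\<in>T. if \<bar>\<bar>A p + B p\<bar> - 1\<bar> \<le> t then 0 else 1) \<le> t^4 * real (card T)"
  shows "(\<Sum>p\<in>T. \<Sum>q\<in>T. if 2*t < \<bar>A p - A q\<bar> then 1 else 0) \<le> 2 * t^2 * real (card T) ^ 2
       \<or> (\<Sum>p\<in>T. \<Sum>q\<in>T. if 2*t < \<bar>B p - B q\<bar> then 1 else 0) \<le> 2 * t^2 * real (card T) ^ 2"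
proof (rule ccontr)
  let ?N = "real (card T)"
  let ?bd = "\<lambda>x::real. if \<bar>\<bar>x\<bar> - 1\<bar> \<le> t then 0 else (1::real)"
  define b where "b = (\<Sum>p\<in>T. ?bd (A p + B p))"
  define PA where "PA = (\<Sum>p\<in>T. \<Sum>q\<in>T. if 2*t < \<bar>A p - A q\<bar> then 1 else (0::real))"
  define PB where "PB = (\<Sum>p\<in>T. \<Sum>q\<in>T. if 2*t < \<bar>B p - B q\<bar> then 1 else (0::real))"
  assume "\<not> ?thesis"
  then have pa: "PA > 2 * t^2 * ?N^2" and pb: "PB > 2 * t^2 * ?N^2" unfolding PA_def PB_def by auto
  have ptw: "(if 2*t < \<bar>A p - A q\<bar> then 1 else 0) * (if 2*t < \<bar>B p - B q\<bar> then 1 else 0)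
     \<le> ?bd (A p + B p) + ?bd (A q + B q) + ?bd (A p + B q) + ?bd (A q + B p)" for p q
  proof (cases "2*t < \<bar>A p - A q\<bar> \<and> 2*t < \<bar>B p - B q\<bar>")
    case True
    then have "\<not> (\<bar>\<bar>A p + B p\<bar> - 1\<bar> \<le> t \<and> \<bar>\<bar>A q + B q\<bar> - 1\<bar> \<le> t \<and> \<bar>\<bar>A p + B q\<bar> - 1\<bar> \<le> t \<and> \<bar>\<bar>A q + B p\<bar> - 1\<bar> \<le> t)"
      using quad[OF t, of "A p" "A q" "B p" "B q"] by blast
    then show ?thesis using True by auto
  next
    case False then show ?thesis by auto
  qed
  have s1: "(\<Sum>p\<in>T. \<Sum>q\<in>T. ?bd (A p + B p)) = ?N * b" by (simp add: b_def sum_distrib_left mult.commute)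
  have s2: "(\<Sum>p\<in>T. \<Sum>q\<in>T. ?bd (A q + B q)) = ?N * b" by (simp add: b_def)
  have s3: "(\<Sum>p\<in>T. \<Sum>q\<in>T. ?bd (A p + B q)) = ?N * b"
    unfolding b_def using indep[of "\<lambda>x y. ?bd (x+y)"] by simp
  have s4: "(\<Sum>p\<in>T. \<Sum>q\<in>T. ?bd (A q + B p)) = ?N * b"
    unfolding b_def using indep[of "\<lambda>x y. ?bd (x+y)"] sum.swap[of "\<lambda>p q. ?bd (A q + B p)" T T] by simp
  have "(\<Sum>p\<in>T. \<Sum>q\<in>T. (if 2*t < \<bar>A p - A q\<bar> then 1 else 0) * (if 2*t < \<bar>B p - B q\<bar> then 1 else (0::real)))
     \<le> (\<Sum>p\<in>T. \<Sum>q\<in>T. ?bd (A p + B p) + ?bd (A q + B q) + ?bd (A p + B q) + ?bd (A q + B p))"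
    by (intro sum_mono ptw)
  also have "\<dots> = 4 * ?N * b" using s1 s2 s3 s4 by (simp add: sum.distrib)
  finally have le: "(\<Sum>p\<in>T. \<Sum>q\<in>T. (if 2*t < \<bar>A p - A q\<bar> then 1 else 0) * (if 2*t < \<bar>B p - B q\<bar> then 1 else (0::real)))
     \<le> 4 * ?N * b" .
  have "PA * PB = ?N^2 * (\<Sum>p\<in>T. \<Sum>q\<in>T. (if 2*t < \<bar>A p - A q\<bar> then 1 else 0) * (if 2*t < \<bar>B p - B q\<bar> then 1 else (0::real)))"
    unfolding PA_def PB_def
    using fourfold[where A=A and B=B and T=T and F="\<lambda>x y. if 2*t < \<bar>x - y\<bar> then 1 else 0" and G="\<lambda>x y. if 2*t < \<bar>x - y\<bar> then 1 else 0", OF indep]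
    by simp
  also have "\<dots> \<le> ?N^2 * (4 * ?N * b)" by (rule mult_left_mono[OF le]) simp
  also have "\<dots> \<le> ?N^2 * (4 * ?N * (t^4 * ?N))"
    using bad unfolding b_def by (intro mult_left_mono) auto
  also have "\<dots> = (2 * t^2 * ?N^2) * (2 * t^2 * ?N^2)" by (simp add: power2_eq_square power4_eq_xxxx)
  finally have "PA * PB \<le> (2 * t^2 * ?N^2) * (2 * t^2 * ?N^2)" .
  moreover have "(2 * t^2 * ?N^2) * (2 * t^2 * ?N^2) < PA * PB"
  proof -
    have "0 \<le> 2 * t^2 * ?N^2" by simp
    moreover have "0 < PA" using pa calculation by linarith
    ultimately show ?thesis using pa pb by (intro mult_strict_mono) auto
  qed
  ultimately show False by simp
qed


lemma core:
  fixes A B :: "'a \<Rightarrow> real"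
  assumes fin: "finite T" and Npos: "card T > 0"
    and indep: "\<And>H. (\<Sum>p\<in>T. \<Sum>q\<in>T. H (A p) (B q)) = real (card T) * (\<Sum>p\<in>T. H (A p) (B p))"
    and t: "0 < t" "t \<le> 1/100"
    and bad: "(\<Sum>p\<in>T. if \<bar>\<bar>A p + B p\<bar> - 1\<bar> \<le> t then 0 else 1) \<le> t^4 * real (card T)"
    and L2: "(\<Sum>p\<in>T. (\<bar>A p + B p\<bar> - 1)^2) \<le> t^6 * real (card T)"
    and mean: "\<bar>(\<Sum>p\<in>T. A p) / real (card T) - \<mu>\<bar> \<le> t"
    and pA: "(\<Sum>p\<in>T. \<Sum>q\<in>T. if 2*t < \<bar>A p - A q\<bar> then 1 else 0) \<le> 2 * t^2 * real (card T) ^ 2"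
  shows "(1 - 3*t) * real (card T) \<le> (\<Sum>p\<in>T. if \<bar>A p - \<mu>\<bar> \<le> 19*t then 1 else 0)
     \<and> (1 - 4*t) * real (card T) \<le> (\<Sum>p\<in>T. if \<bar>\<bar>B p + \<mu>\<bar> - 1\<bar> \<le> 24*t then 1 else 0)"
proof -
  define N where "N = real (card T)"
  have N: "N > 0" using Npos by (simp add: N_def)
  define Q where "Q = (\<lambda>p. \<Sum>q\<in>T. if 2*t < \<bar>A p - A q\<bar> then 1 else (0::real))"
  define R where "R = (\<lambda>p. \<Sum>q\<in>T. \<bar>A p + B q\<bar>)"
  define b where "b = (\<Sum>p\<in>T. if \<bar>\<bar>A p + B p\<bar> - 1\<bar> \<le> t then 0 else (1::real))"
  have t3: "t^3 > 0" using t by simp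
  have Qnn: "Q p \<ge> 0" for p unfolding Q_def by (intro sum_nonneg) auto
  have Rnn: "R p \<ge> 0" for p unfolding R_def by (intro sum_nonneg) auto
  have sumQ: "(\<Sum>p\<in>T. Q p) \<le> 2 * t^2 * N^2" using pA by (simp add: Q_def N_def)
  have absS: "(\<Sum>p\<in>T. \<bar>A p + B p\<bar>) \<le> N * (1 + t^3)"
  proof -
    have "(\<Sum>p\<in>T. \<bar>A p + B p\<bar>) \<le> (\<Sum>p\<in>T. 1 + t^3/2 + (\<bar>A p + B p\<bar> - 1)^2 * (1/(2*t^3)))"
      by (intro sum_mono amgm_abs t3)
    also have "\<dots> = N * (1 + t^3/2) + (\<Sum>p\<in>T. (\<bar>A p + B p\<bar> - 1)^2) * (1/(2*t^3))"
      by (simp add: sum.distrib sum_distrib_right sum_divide_distrib N_def)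
    also have "\<dots> \<le> N * (1 + t^3/2) + (t^6 * N) * (1/(2*t^3))"
      using L2 t3 by (intro add_left_mono mult_right_mono) (auto simp: N_def)
    also have "(t^6 * N) * (1/(2*t^3)) = N * (t^3/2)" using t3
      by (simp add: field_simps power_add[symmetric] eval_nat_numeral)
    finally show ?thesis by (simp add: algebra_simps)
  qed
  have sumR: "(\<Sum>p\<in>T. R p) = N * (\<Sum>p\<in>T. \<bar>A p + B p\<bar>)"
    unfolding R_def N_def using indep[of "\<lambda>x y. \<bar>x + y\<bar>"] by simp
  have "(\<Sum>p\<in>T. Q p / (4*t^2*N) + R p / (4*N)) = (\<Sum>p\<in>T. Q p) / (4*t^2*N) + (\<Sum>p\<in>T. R p) / (4*N)"
    by (simp add: sum.distrib sum_divide_distrib)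
  also have "\<dots> \<le> (2 * t^2 * N^2) / (4*t^2*N) + (N * (N * (1 + t^3))) / (4*N)"
    using sumQ absS N t by (intro add_mono divide_right_mono) (auto simp: sumR intro!: mult_left_mono)
  also have "\<dots> = N/2 + N * (1 + t^3) / 4" using N t by (simp add: field_simps power2_eq_square)
  also have "\<dots> < N"
  proof -
    have "t^3 < 1" using t power_strict_mono[of t 1 3] by simp
    then show ?thesis using N by (simp add: field_simps)
  qed
  finally obtain p0 where p0: "p0 \<in> T" and hp0: "Q p0 / (4*t^2*N) + R p0 / (4*N) < 1"
    using exists_lt1[OF fin] by (auto simp: N_def)
  have Qp0: "Q p0 < 4*t^2*N"
  proof -
    have "Q p0 / (4*t^2*N) < 1" using hp0 Rnn[of p0] N by (smt (verit) divide_nonneg_pos)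
    then show ?thesis using N t by (simp add: field_simps)
  qed
  have Rp0: "R p0 < 4*N"
  proof -
    have "R p0 / (4*N) < 1" using hp0 Qnn[of p0] N t by (smt (verit) divide_nonneg_pos zero_less_mult_iff zero_less_power)
    then show ?thesis using N by (simp add: field_simps)
  qed
  define \<alpha> where "\<alpha> = A p0"
  define out where "out = (\<lambda>p. if 2*t < \<bar>A p - \<alpha>\<bar> then 1 else (0::real))"
  have out01: "0 \<le> out p" "out p \<le> 1" for p by (auto simp: out_def)
  have sumout: "(\<Sum>p\<in>T. out p) = Q p0"
    unfolding out_def Q_def \<alpha>_def by (simp add: abs_minus_commute)
  have tri: "N * \<bar>A p - \<alpha>\<bar> \<le> (\<Sum>q\<in>T. \<bar>A p + B q\<bar>) + R p0" for p
  proof -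
    have "N * \<bar>A p - \<alpha>\<bar> = (\<Sum>q\<in>T. \<bar>A p - \<alpha>\<bar>)" by (simp add: N_def)
    also have "\<dots> \<le> (\<Sum>q\<in>T. \<bar>A p + B q\<bar> + \<bar>\<alpha> + B q\<bar>)" by (intro sum_mono) linarith
    also have "\<dots> = (\<Sum>q\<in>T. \<bar>A p + B q\<bar>) + R p0" by (simp add: sum.distrib R_def \<alpha>_def)
    finally show ?thesis .
  qed
  have Sout: "(\<Sum>p\<in>T. out p * \<bar>A p + B p\<bar>) \<le> Q p0 * (1 + t^3/2) + N * (t^3/2)"
  proof -
    have "(\<Sum>p\<in>T. out p * \<bar>A p + B p\<bar>) \<le> (\<Sum>p\<in>T. out p * (1 + t^3/2) + (\<bar>A p + B p\<bar> - 1)^2 * (1/(2*t^3)))"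
    proof (intro sum_mono)
      fix p
      have h: "\<bar>A p + B p\<bar> \<le> 1 + t^3/2 + (\<bar>A p + B p\<bar> - 1)^2 * (1/(2*t^3))" by (rule amgm_abs[OF t3])
      have "0 \<le> (\<bar>A p + B p\<bar> - 1)^2 * (1/(2*t^3))" using t3 by simp
      then show "out p * \<bar>A p + B p\<bar> \<le> out p * (1 + t^3/2) + (\<bar>A p + B p\<bar> - 1)^2 * (1/(2*t^3))"
        using h by (auto simp: out_def)
    qed
    also have "\<dots> = Q p0 * (1 + t^3/2) + (\<Sum>p\<in>T. (\<bar>A p + B p\<bar> - 1)^2) * (1/(2*t^3))"
      by (simp add: sum.distrib sum_distrib_right[symmetric] sum_divide_distrib sumout)
    also have "\<dots> \<le> Q p0 * (1 + t^3/2) + (t^6 * N) * (1/(2*t^3))"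
      using L2 t3 by (intro add_left_mono mult_right_mono) (auto simp: N_def)
    also have "(t^6 * N) * (1/(2*t^3)) = N * (t^3/2)" using t3
      by (simp add: field_simps power_add[symmetric] eval_nat_numeral)
    finally show ?thesis .
  qed
  have key: "N * (\<Sum>p\<in>T. out p * \<bar>A p - \<alpha>\<bar>) \<le> N * (\<Sum>p\<in>T. out p * \<bar>A p + B p\<bar>) + Q p0 * R p0"
  proof -
    have "N * (\<Sum>p\<in>T. out p * \<bar>A p - \<alpha>\<bar>) = (\<Sum>p\<in>T. out p * (N * \<bar>A p - \<alpha>\<bar>))"
      by (simp add: sum_distrib_left algebra_simps)
    also have "\<dots> \<le> (\<Sum>p\<in>T. out p * ((\<Sum>q\<in>T. \<bar>A p + B q\<bar>) + R p0))"
      using tri out01 by (intro sum_mono mult_left_mono) auto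
    also have "\<dots> = (\<Sum>p\<in>T. \<Sum>q\<in>T. out p * \<bar>A p + B q\<bar>) + (\<Sum>p\<in>T. out p) * R p0"
      by (simp add: algebra_simps sum.distrib sum_distrib_left sum_distrib_right)
    also have "(\<Sum>p\<in>T. \<Sum>q\<in>T. out p * \<bar>A p + B q\<bar>) = N * (\<Sum>p\<in>T. out p * \<bar>A p + B p\<bar>)"
      unfolding out_def N_def using indep[of "\<lambda>x y. (if 2*t < \<bar>x - \<alpha>\<bar> then 1 else 0) * \<bar>x + y\<bar>"] by simp
    finally show ?thesis by (simp add: sumout)
  qed
  have outA: "(\<Sum>p\<in>T. out p * \<bar>A p - \<alpha>\<bar>) \<le> Q p0 * (1 + t^3/2) + N * (t^3/2) + Q p0 * 4"
  proof -
    have "Q p0 * R p0 \<le> Q p0 * (4 * N)" using Rp0 Qnn[of p0] by (intro mult_left_mono) auto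
    moreover have "N * (\<Sum>p\<in>T. out p * \<bar>A p + B p\<bar>) \<le> N * (Q p0 * (1 + t^3/2) + N * (t^3/2))"
      using Sout N by (intro mult_left_mono) auto
    ultimately have "N * (\<Sum>p\<in>T. out p * \<bar>A p - \<alpha>\<bar>) \<le> N * (Q p0 * (1 + t^3/2) + N * (t^3/2)) + Q p0 * (4 * N)"
      using key by linarith
    also have "\<dots> = N * (Q p0 * (1 + t^3/2) + N * (t^3/2) + Q p0 * 4)" by (simp add: algebra_simps)
    finally have "N * (\<Sum>p\<in>T. out p * \<bar>A p - \<alpha>\<bar>) \<le> N * (Q p0 * (1 + t^3/2) + N * (t^3/2) + Q p0 * 4)" .
    then show ?thesis using N by simp
  qed
  have poly: "4*t^2*(5 + t^3/2) + t^3/2 \<le> t/4"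
  proof -
    have a: "t^2 \<le> t/100" using t by (simp add: power2_eq_square mult_left_le)
    have e3: "t^3 = t * t^2" by (simp add: power3_eq_cube power2_eq_square)
    have "t * t^2 \<le> 1 * t^2" using t by (intro mult_right_mono) auto
    then have b3: "t^3 \<le> t/100" using a e3 by simp
    have c: "t^3 \<le> 1" using t by (simp add: power_le_one)
    have "4*t^2*(5 + t^3/2) \<le> 4*(t/100)*(5+1/2)" using a c t by (intro mult_mono) auto
    moreover have "4 * (t / 100) * (5 + 1 / 2) = 22*t/100" by simp
    ultimately show ?thesis using b3 t by linarith
  qed
  have outA2: "(\<Sum>p\<in>T. out p * \<bar>A p - \<alpha>\<bar>) \<le> N * (t/4)"
  proof -
    have "Q p0 * (1 + t^3/2) + N * (t^3/2) + Q p0 * 4 = Q p0 * (5 + t^3/2) + N * (t^3/2)" by (simp add: algebra_simps)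
    also have "\<dots> \<le> (4*t^2*N) * (5 + t^3/2) + N * (t^3/2)"
      using Qp0 t by (intro add_right_mono mult_right_mono) auto
    also have "\<dots> = N * (4*t^2*(5 + t^3/2) + t^3/2)" by (simp add: algebra_simps)
    also have "\<dots> \<le> N * (t/4)" using poly N by (intro mult_left_mono) auto
    finally show ?thesis using outA by linarith
  qed
  have sumdev: "(\<Sum>p\<in>T. \<bar>A p - \<alpha>\<bar>) \<le> N * (2*t) + N * (t/4)"
  proof -
    have "(\<Sum>p\<in>T. \<bar>A p - \<alpha>\<bar>) \<le> (\<Sum>p\<in>T. 2*t + out p * \<bar>A p - \<alpha>\<bar>)"
      using t by (intro sum_mono) (auto simp: out_def)
    also have "\<dots> = N * (2*t) + (\<Sum>p\<in>T. out p * \<bar>A p - \<alpha>\<bar>)" by (simp add: sum.distrib N_def)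
    finally show ?thesis using outA2 by linarith
  qed
  have meanalpha: "\<bar>(\<Sum>p\<in>T. A p) / N - \<alpha>\<bar> \<le> 3*t"
  proof -
    have "(\<Sum>p\<in>T. A p) / N - \<alpha> = (\<Sum>p\<in>T. A p - \<alpha>) / N" using N by (simp add: sum_subtractf field_simps N_def)
    then have "\<bar>(\<Sum>p\<in>T. A p) / N - \<alpha>\<bar> = \<bar>\<Sum>p\<in>T. A p - \<alpha>\<bar> / N" using N by simp
    also have "\<dots> \<le> (\<Sum>p\<in>T. \<bar>A p - \<alpha>\<bar>) / N" using N by (intro divide_right_mono sum_abs) auto
    also have "\<dots> \<le> (N * (2*t) + N * (t/4)) / N" using N sumdev by (intro divide_right_mono) auto
    also have "\<dots> \<le> 3 * t" using N t by (simp add: field_simps)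
    finally show ?thesis .
  qed
  have am: "\<bar>\<alpha> - \<mu>\<bar> \<le> 4*t" using meanalpha mean unfolding N_def by linarith
  have Qs: "Q p0 \<le> 3*t*N"
  proof -
    have "4*t^2 \<le> 3*t" using t by (simp add: power2_eq_square)
    then have "4*t^2*N \<le> 3*t*N" using N by (intro mult_right_mono) auto
    then show ?thesis using Qp0 by linarith
  qed
  have part1: "(1 - 3*t) * N \<le> (\<Sum>p\<in>T. if \<bar>A p - \<mu>\<bar> \<le> 19*t then 1 else 0)"
  proof -
    have "(\<Sum>p\<in>T. 1 - out p) \<le> (\<Sum>p\<in>T. if \<bar>A p - \<mu>\<bar> \<le> 19*t then 1 else 0)"
      using am t by (intro sum_mono) (auto simp: out_def)
    moreover have "(\<Sum>p\<in>T. 1 - out p) = N - Q p0" by (simp add: sum_subtractf sumout N_def)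
    ultimately show ?thesis using Qs by (simp add: algebra_simps)
  qed
  have bs: "b \<le> t * N"
  proof -
    have c: "t^3 \<le> 1" using t by (intro power_le_one) auto
    have "t^4 = t * t^3" by (simp add: eval_nat_numeral)
    moreover have "t * t^3 \<le> t * 1" using c t by (intro mult_left_mono) auto
    ultimately have "t^4 \<le> t" by simp
    then have "t^4 * N \<le> t * N" using N by (intro mult_right_mono) auto
    then show ?thesis using bad by (simp add: b_def N_def)
  qed
  have part2: "(1 - 4*t) * N \<le> (\<Sum>p\<in>T. if \<bar>\<bar>B p + \<mu>\<bar> - 1\<bar> \<le> 24*t then 1 else 0)"
  proof -
    have "(\<Sum>p\<in>T. 1 - out p - (if \<bar>\<bar>A p + B p\<bar> - 1\<bar> \<le> t then 0 else 1))
        \<le> (\<Sum>p\<in>T. if \<bar>\<bar>B p + \<mu>\<bar> - 1\<bar> \<le> 24*t then 1 else 0)"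
    proof (intro sum_mono)
      fix p
      show "1 - out p - (if \<bar>\<bar>A p + B p\<bar> - 1\<bar> \<le> t then 0 else 1) \<le> (if \<bar>\<bar>B p + \<mu>\<bar> - 1\<bar> \<le> 24*t then 1 else 0)"
      proof (cases "\<bar>A p - \<alpha>\<bar> \<le> 2*t \<and> \<bar>\<bar>A p + B p\<bar> - 1\<bar> \<le> t")
        case True
        then have "\<bar>\<bar>B p + \<mu>\<bar> - 1\<bar> \<le> 24*t" using am t by (simp add: abs_if split: if_splits) linarith?
        then show ?thesis using True by (auto simp: out_def)
      next
        case False then show ?thesis by (auto simp: out_def)
      qed
    qed
    moreover have "(\<Sum>p\<in>T. 1 - out p - (if \<bar>\<bar>A p + B p\<bar> - 1\<bar> \<le> t then 0 else 1)) = N - Q p0 - b"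
      by (simp add: sum_subtractf sumout N_def b_def)
    ultimately show ?thesis using Qs bs by (simp add: algebra_simps)
  qed
  show ?thesis using part1 part2 by (simp add: N_def)
qed


lemma ind_sum: "finite T \<Longrightarrow> real (card {x\<in>T. P x}) = (\<Sum>x\<in>T. if P x then 1 else 0)"
  by (simp add: sum.If_cases Int_def)

lemma ind_sum_neg: "finite T \<Longrightarrow> (\<Sum>x\<in>T. if P x then 0 else 1) = real (card T) - real (card {x\<in>T. P x})"
proof -
  assume f: "finite T"
  have "(\<Sum>x\<in>T. if P x then 0 else 1) = (\<Sum>x\<in>T. 1 - (if P x then 1 else (0::real)))"
    by (intro sum.cong) auto
  also have "\<dots> = real (card T) - (\<Sum>x\<in>T. if P x then 1 else 0)" by (simp add: sum_subtractf)
  finally show ?thesis using ind_sum[OF f, of P] by simp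
qed

lemma finish:
  fixes A B :: "'a \<Rightarrow> real"
  assumes f: "finite T" and N: "card T > 0"
    and h1: "(1 - 3*t) * real (card T) \<le> (\<Sum>p\<in>T. if \<bar>A p - \<mu>\<bar> \<le> 19*t then 1 else 0)"
    and h2: "(1 - 4*t) * real (card T) \<le> (\<Sum>p\<in>T. if \<bar>\<bar>B p + \<mu>\<bar> - 1\<bar> \<le> 24*t then 1 else 0)"
  shows "almost_close T (3*t) (19*t) \<mu> A \<and> almost_boolean T (4*t) (24*t) (\<lambda>p. B p + \<mu>)"
proof -
  have N': "real (card T) > 0" using N by simp
  have "1 - 3*t \<le> real (card {x\<in>T. \<bar>A x - \<mu>\<bar> \<le> 19*t}) / real (card T)"
    using h1 N' by (simp add: ind_sum[OF f] pos_le_divide_eq)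
  moreover have "1 - 4*t \<le> real (card {x\<in>T. \<bar>\<bar>B x + \<mu>\<bar> - 1\<bar> \<le> 24*t}) / real (card T)"
    using h2 N' by (simp add: ind_sum[OF f] pos_le_divide_eq)
  ultimately show ?thesis by (simp add: almost_close_def almost_boolean_def unif_prob_def)
qed

lemma main_gen:
  assumes e0: "0 < \<epsilon>" and e1: "\<epsilon> \<le> (1/100::real)^7" and ty0: "typical n a c \<epsilon> X Y"
  shows "(almost_close (TXY n X Y) (3 * \<epsilon> powr (1/7)) (19 * \<epsilon> powr (1/7)) (c - 1/2) (gfun1 a X) \<and>
             almost_boolean (TXY n X Y) (4 * \<epsilon> powr (1/7)) (24 * \<epsilon> powr (1/7)) (\<lambda>\<pi>. gfun2 n a X \<pi> + c - 1/2)) \<or>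
            (almost_close (TXY n X Y) (3 * \<epsilon> powr (1/7)) (19 * \<epsilon> powr (1/7)) (c - 1/2) (gfun2 n a X) \<and>
             almost_boolean (TXY n X Y) (4 * \<epsilon> powr (1/7)) (24 * \<epsilon> powr (1/7)) (\<lambda>\<pi>. gfun1 a X \<pi> + c - 1/2))"
proof -
  define T where "T = TXY n X Y"
  define A where "A = gfun1 a X"
  define B where "B = gfun2 n a X"
  define t where "t = \<epsilon> powr (1/7)"
  define N where "N = real (card T)"
  have X: "X \<subseteq> {..<n}" using ty0 by (simp add: typical_def)
  have AB: "almost_boolean T (\<epsilon> powr (4/7)) t (\<lambda>\<pi>. A \<pi> + B \<pi>)"
   and m1: "\<bar>avg T A - (c - 1/2)\<bar> \<le> t" and m2: "\<bar>avg T B - (c - 1/2)\<bar> \<le> t"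
   and L2: "avg T (\<lambda>\<pi>. (\<bar>A \<pi> + B \<pi>\<bar> - 1)^2) \<le> \<epsilon> powr (6/7)"
    using ty0 by (simp_all add: typical_def Let_def T_def A_def B_def t_def)
  have tpos: "0 < t" using e0 by (simp add: t_def)
  have tle: "t \<le> 1/100"
  proof -
    have "t \<le> ((1/100::real)^7) powr (1/7)" unfolding t_def using e0 e1 by (intro powr_mono2) auto
    also have "((1/100::real)^7) powr (1/7) = 1/100"
    proof -
      have "((1/100::real)^7) powr (1/7) = ((1/100) powr 7) powr (1/7)" by simp
      also have "\<dots> = (1/100) powr (7 * (1/7))" by (rule powr_powr)
      also have "\<dots> = 1/100" by simp
      finally show ?thesis .
    qed
    finally show ?thesis .
  qed
  have t4: "\<epsilon> powr (4/7) = t^4" unfolding t_def using e0 by (simp add: powr_power)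
  have t6: "\<epsilon> powr (6/7) = t^6" unfolding t_def using e0 by (simp add: powr_power)
  have fin: "finite T"
  proof -
    have "T \<subseteq> {p. p permutes {..<n}}" by (auto simp: T_def TXY_def Sn_def)
    then show ?thesis using finite_permutations[of "{..<n}"] finite_subset by auto
  qed
  have t4lt: "t^4 < 1" using tpos tle power_strict_mono[of t 1 4] by simp
  have Npos: "card T > 0"
  proof (rule ccontr)
    assume "\<not> card T > 0"
    then have "card T = 0" by simp
    then show False using AB t4lt by (simp add: almost_boolean_def unif_prob_def t4)
  qed
  have N: "N > 0" using Npos by (simp add: N_def)
  have bad: "(\<Sum>p\<in>T. if \<bar>\<bar>A p + B p\<bar> - 1\<bar> \<le> t then 0 else 1) \<le> t^4 * N"
  proof -
    have "1 - t^4 \<le> real (card {x\<in>T. \<bar>\<bar>A x + B x\<bar> - 1\<bar> \<le> t}) / N"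
      using AB by (simp add: almost_boolean_def unif_prob_def t4 N_def)
    then have "(1 - t^4) * N \<le> real (card {x\<in>T. \<bar>\<bar>A x + B x\<bar> - 1\<bar> \<le> t})" using N by (simp add: pos_le_divide_eq)
    then show ?thesis by (simp add: ind_sum_neg[OF fin] N_def algebra_simps)
  qed
  have L2': "(\<Sum>p\<in>T. (\<bar>A p + B p\<bar> - 1)^2) \<le> t^6 * N"
    using L2 N by (simp add: avg_def t6 N_def pos_divide_le_eq)
  have mA: "\<bar>(\<Sum>p\<in>T. A p) / real (card T) - (c - 1/2)\<bar> \<le> t" using m1 by (simp add: avg_def)
  have mB: "\<bar>(\<Sum>p\<in>T. B p) / real (card T) - (c - 1/2)\<bar> \<le> t" using m2 by (simp add: avg_def)
  have indep: "\<And>H. (\<Sum>p\<in>T. \<Sum>q\<in>T. H (A p) (B q)) = real (card T) * (\<Sum>p\<in>T. H (A p) (B p))"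
    unfolding T_def A_def B_def by (rule indep_perm[OF X])
  have indep': "(\<Sum>p\<in>T. \<Sum>q\<in>T. H (B p) (A q)) = real (card T) * (\<Sum>p\<in>T. H (B p) (A p))" for H
    using indep[of "\<lambda>x y. H y x"] sum.swap[of "\<lambda>p q. H (B p) (A q)" T T] by simp
  have bad': "(\<Sum>p\<in>T. if \<bar>\<bar>B p + A p\<bar> - 1\<bar> \<le> t then 0 else 1) \<le> t^4 * real (card T)"
    using bad by (simp add: add.commute N_def)
  have L2'': "(\<Sum>p\<in>T. (\<bar>B p + A p\<bar> - 1)^2) \<le> t^6 * real (card T)"
    using L2' by (simp add: add.commute N_def)
  have eqf1: "(\<lambda>\<pi>. gfun2 n a X \<pi> + c - 1/2) = (\<lambda>p. B p + (c - 1/2))" by (auto simp: B_def)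
  have eqf2: "(\<lambda>\<pi>. gfun1 a X \<pi> + c - 1/2) = (\<lambda>p. A p + (c - 1/2))" by (auto simp: A_def)
  have t2: "t < 1/2" using tle by simp
  from split_lemma[where T=T and A=A and B=B, OF indep tpos t2] bad
  consider "(\<Sum>p\<in>T. \<Sum>q\<in>T. if 2*t < \<bar>A p - A q\<bar> then 1 else 0) \<le> 2 * t^2 * real (card T) ^ 2"
    | "(\<Sum>p\<in>T. \<Sum>q\<in>T. if 2*t < \<bar>B p - B q\<bar> then 1 else 0) \<le> 2 * t^2 * real (card T) ^ 2"
    by (auto simp: N_def)
  then show ?thesis
  proof cases
    case 1
    have "almost_close T (3*t) (19*t) (c - 1/2) A \<and> almost_boolean T (4*t) (24*t) (\<lambda>p. B p + (c - 1/2))"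
      using core[where T=T and A=A and B=B and t=t, OF fin Npos indep tpos tle _ _ mA 1] bad L2'
      by (intro finish[OF fin Npos]) (auto simp: N_def)
    then show ?thesis unfolding eqf1 by (simp add: T_def A_def t_def)
  next
    case 2
    have "almost_close T (3*t) (19*t) (c - 1/2) B \<and> almost_boolean T (4*t) (24*t) (\<lambda>p. A p + (c - 1/2))"
      using core[where T=T and A=B and B=A and t=t, OF fin Npos indep' tpos tle bad' L2'' mB 2]
      by (intro finish[OF fin Npos]) auto
    then show ?thesis unfolding eqf2 by (simp add: T_def B_def t_def)
  qed
qed

theorem lemma2p7:
  shows "\<exists>c0::real. c0 > 0 \<and>
    (\<forall>n::nat. \<forall>F c. n \<ge> 2 \<longrightarrow> F \<subseteq> Sn n \<longrightarrow> real (card F) = c * fact n \<longrightarrow>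
       0 < c \<longrightarrow> c < 1 \<longrightarrow>
       (let \<eta> = min c (1 - c); f = pm_ind F; f1 = proj_U1 n f;
            \<epsilon> = avg (Sn n) (\<lambda>\<pi>. (f \<pi> - f1 \<pi>)^2); a = coef n f c in
        0 < \<epsilon> \<longrightarrow> \<epsilon> \<le> c0 * \<eta>^7 \<longrightarrow>
        (\<forall>X Y. typical n a c \<epsilon> X Y \<longrightarrow>
          (let T = TXY n X Y; g1 = gfun1 a X; g2 = gfun2 n a X in
            (almost_close T (3 * \<epsilon> powr (1/7)) (19 * \<epsilon> powr (1/7)) (c - 1/2) g1 \<and>
             almost_boolean T (4 * \<epsilon> powr (1/7)) (24 * \<epsilon> powr (1/7)) (\<lambda>\<pi>. g2 \<pi> + c - 1/2)) \<or>
            (almost_close T (3 * \<epsilon> powr (1/7)) (19 * \<epsilon> powr (1/7)) (c - 1/2) g2 \<and>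
             almost_boolean T (4 * \<epsilon> powr (1/7)) (24 * \<epsilon> powr (1/7)) (\<lambda>\<pi>. g1 \<pi> + c - 1/2))))))"
proof (intro exI[of _ "(1/100::real)^7"] conjI allI impI)
  show "0 < (1/100::real)^7" by simp
next
  fix n :: nat and F and c :: real
  assume c0: "0 < c" and c1: "c < 1"
  show "let \<eta> = min c (1 - c); f = pm_ind F; f1 = proj_U1 n f;
            \<epsilon> = avg (Sn n) (\<lambda>\<pi>. (f \<pi> - f1 \<pi>)^2); a = coef n f c in
        0 < \<epsilon> \<longrightarrow> \<epsilon> \<le> (1/100)^7 * \<eta>^7 \<longrightarrow>
        (\<forall>X Y. typical n a c \<epsilon> X Y \<longrightarrow>
          (let T = TXY n X Y; g1 = gfun1 a X; g2 = gfun2 n a X in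
            (almost_close T (3 * \<epsilon> powr (1/7)) (19 * \<epsilon> powr (1/7)) (c - 1/2) g1 \<and>
             almost_boolean T (4 * \<epsilon> powr (1/7)) (24 * \<epsilon> powr (1/7)) (\<lambda>\<pi>. g2 \<pi> + c - 1/2)) \<or>
            (almost_close T (3 * \<epsilon> powr (1/7)) (19 * \<epsilon> powr (1/7)) (c - 1/2) g2 \<and>
             almost_boolean T (4 * \<epsilon> powr (1/7)) (24 * \<epsilon> powr (1/7)) (\<lambda>\<pi>. g1 \<pi> + c - 1/2))))"
    unfolding Let_def
  proof (intro impI allI)
    fix X Y
    define \<epsilon> where "\<epsilon> = avg (Sn n) (\<lambda>\<pi>. (pm_ind F \<pi> - proj_U1 n (pm_ind F) \<pi>)^2)"
    define \<eta> where "\<eta> = min c (1 - c)"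
    assume e0: "0 < avg (Sn n) (\<lambda>\<pi>. (pm_ind F \<pi> - proj_U1 n (pm_ind F) \<pi>)^2)"
      and e1: "avg (Sn n) (\<lambda>\<pi>. (pm_ind F \<pi> - proj_U1 n (pm_ind F) \<pi>)^2) \<le> (1/100)^7 * (min c (1 - c))^7"
      and ty: "typical n (coef n (pm_ind F) c) c (avg (Sn n) (\<lambda>\<pi>. (pm_ind F \<pi> - proj_U1 n (pm_ind F) \<pi>)^2)) X Y"
    have h0: "0 \<le> \<eta>" "\<eta> \<le> 1" using c0 c1 by (auto simp: \<eta>_def)
    have "\<eta>^7 \<le> 1" using h0 by (intro power_le_one) auto
    then have "(1/100::real)^7 * \<eta>^7 \<le> (1/100)^7 * 1" by (intro mult_left_mono) auto
    then have e1': "\<epsilon> \<le> (1/100)^7" using e1 unfolding \<epsilon>_def \<eta>_def by linarith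
    show "(almost_close (TXY n X Y) (3 * \<epsilon> powr (1/7)) (19 * \<epsilon> powr (1/7)) (c - 1/2) (gfun1 (coef n (pm_ind F) c) X) \<and>
             almost_boolean (TXY n X Y) (4 * \<epsilon> powr (1/7)) (24 * \<epsilon> powr (1/7)) (\<lambda>\<pi>. gfun2 n (coef n (pm_ind F) c) X \<pi> + c - 1/2)) \<or>
            (almost_close (TXY n X Y) (3 * \<epsilon> powr (1/7)) (19 * \<epsilon> powr (1/7)) (c - 1/2) (gfun2 n (coef n (pm_ind F) c) X) \<and>
             almost_boolean (TXY n X Y) (4 * \<epsilon> powr (1/7)) (24 * \<epsilon> powr (1/7)) (\<lambda>\<pi>. gfun1 (coef n (pm_ind F) c) X \<pi> + c - 1/2))"
      using main_gen[OF _ e1'] e0 ty by (simp add: \<epsilon>_def)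
  qed
qed

end
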